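(* Let $\{a_n\}_{n\in\mathbb{N}}$ be a sequence in $(0,\infty)$ such that $a=\sum_{n=1}^\infty a_n$ converges. Then the series $A(k):=\sum_{n=1}^\infty \log(1+a_n^2k^2)$ converges uniformly on compact subsets of $\mathbb{R}$ to a continuous function $A:\mathbb{R}\to\mathbb{R}$ such that: (i) $0\le A(k)\le a|k|$ for all $k\in\mathbb{R}$; (ii) $A$ is even and strictly increasing on $k\ge0$; (iii) $\lim_{k\to\infty}A(k)=\infty$ and $\lim_{k\to\infty}\frac{A(k)}{|k|}=\lim_{k\to0}\frac{A(k)}{|k|}=0$; (iv) $\int_0^\infty \frac{A(k)}{k^2}\,\mathrm{d}k=\pi a$; (v) for the function $g$ constructed from $\{a_n\}$ as below, and for $\alpha=\frac1{20}$, $\beta=\frac{7}{40}$, we have $e^{-A(\sqrt\beta k)}\le \hat g(k)\le e^{-A(\sqrt\alpha k)}$ for all $k\in\mathbb{R}$.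
   Context: Let $\eta(x)=\frac32(1-|x|)^2$ for $|x|\le1$ and $\eta(x)=0$ otherwise. Given the sequence $\{a_n\}$, set $\eta_n(x)=\frac{1}{a_n}\eta(x/a_n)$, $g_1=\eta_1$, $g_{n+1}=g_n*\eta_{n+1}$; the $g_n$ converge uniformly to a smooth compactly supported function $g$. The Fourier transform is $\hat f(k)=\int e^{-ikx}f(x)\,\mathrm{d}x$. *)

theory Defs
  imports "HOL-Analysis.Analysis"
begin

text \<open>The sequence (a_1, a_2, ...) of the paper is represented 0-indexed as a 0, a 1, ...\<close>

definition A_partial :: "(nat \<Rightarrow> real) \<Rightarrow> nat \<Rightarrow> real \<Rightarrow> real" where
  "A_partial a N k = (\<Sum>n<N. ln (1 + (a n)\<^sup>2 * k\<^sup>2))"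

definition A_fun :: "(nat \<Rightarrow> real) \<Rightarrow> real \<Rightarrow> real" where
  "A_fun a k = (\<Sum>n. ln (1 + (a n)\<^sup>2 * k\<^sup>2))"

definition eta :: "real \<Rightarrow> real" where
  "eta x = (if \<bar>x\<bar> \<le> 1 then 3/2 * (1 - \<bar>x\<bar>)\<^sup>2 else 0)"

definition eta_scaled :: "real \<Rightarrow> real \<Rightarrow> real" where
  "eta_scaled c x = (1 / c) * eta (x / c)"

definition conv :: "(real \<Rightarrow> real) \<Rightarrow> (real \<Rightarrow> real) \<Rightarrow> real \<Rightarrow> real" where
  "conv f h x = integral UNIV (\<lambda>y. f y * h (x - y))"

fun gseq :: "(nat \<Rightarrow> real) \<Rightarrow> nat \<Rightarrow> real \<Rightarrow> real" where
  "gseq a 0 = eta_scaled (a 0)"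
| "gseq a (Suc n) = conv (gseq a n) (eta_scaled (a (Suc n)))"

text \<open>The limit function g (the g_n converge uniformly, in particular pointwise).\<close>
definition g_lim :: "(nat \<Rightarrow> real) \<Rightarrow> real \<Rightarrow> real" where
  "g_lim a x = lim (\<lambda>n. gseq a n x)"

definition fourier :: "(real \<Rightarrow> real) \<Rightarrow> real \<Rightarrow> complex" where
  "fourier f k = integral UNIV (\<lambda>x. exp (- \<i> * complex_of_real (k * x)) * complex_of_real (f x))"

end

theory Submission
  imports Defs "HOL-Real_Asymp.Real_Asymp"
begin

lemma sc: "sin_coeff 0 = 0" "sin_coeff 1 = 1" "sin_coeff 2 = 0" "sin_coeff 3 = -1/6"
  "sin_coeff 4 = 0" "sin_coeff 5 = 1/120" "sin_coeff 6 = 0" "sin_coeff 7 = -1/5040"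
  "sin_coeff 8 = 0" "sin_coeff (Suc 0) = 1"
  by (simp_all add: sin_coeff_def fact_numeral)

lemma sin_upper7: fixes x :: real assumes "0 \<le> x"
  shows "sin x \<le> x - x^3/6 + x^5/120 + x^7/5040"
proof -
  have "\<bar>sin x - (\<Sum>m<7. sin_coeff m * x ^ m)\<bar> \<le> inverse (fact 7) * \<bar>x\<bar> ^ 7"
    by (rule Maclaurin_sin_bound)
  moreover have "(\<Sum>m<7. sin_coeff m * x ^ m) = x - x^3/6 + x^5/120"
    by (simp add: lessThan_nat_numeral sc field_simps)
  ultimately have "\<bar>sin x - (x - x^3/6 + x^5/120)\<bar> \<le> x^7/5040"
    using assms by (simp add: fact_numeral)
  then show ?thesis by (simp only: abs_le_iff) linarith
qed

lemma sin_lower9: fixes x :: real assumes "0 \<le> x"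
  shows "x - x^3/6 + x^5/120 - x^7/5040 - x^9/362880 \<le> sin x"
proof -
  have "\<bar>sin x - (\<Sum>m<9. sin_coeff m * x ^ m)\<bar> \<le> inverse (fact 9) * \<bar>x\<bar> ^ 9"
    by (rule Maclaurin_sin_bound)
  moreover have "(\<Sum>m<9. sin_coeff m * x ^ m) = x - x^3/6 + x^5/120 - x^7/5040"
    by (simp add: lessThan_nat_numeral sc field_simps)
  ultimately have "\<bar>sin x - (x - x^3/6 + x^5/120 - x^7/5040)\<bar> \<le> x^9/362880"
    using assms by (simp add: fact_numeral)
  then show ?thesis by (simp only: abs_le_iff) linarith
qed

lemma pi_lo: "3.14159 \<le> pi" using pi_approx(1) by simp
lemma pi_hi: "pi \<le> 3.1416" using pi_approx(2) by simp

lemma sin_nonpos_pi_2pi: fixes t :: real assumes "pi \<le> t" "t \<le> 2*pi" shows "sin t \<le> 0"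
proof -
  have "0 \<le> sin (t - pi)" using assms by (intro sin_ge_zero) auto
  then show ?thesis by simp
qed

lemma hi_ineq: fixes t :: real assumes t0: "0 \<le> t"
  shows "120*t - 14*t^3 \<le> (120 + 6*t^2) * sin t"
proof (cases "t \<le> 3")
  case True
  let ?L = "t - t^3/6 + t^5/120 - t^7/5040 - t^9/362880"
  have s: "?L \<le> sin t" using sin_lower9[OF t0] .
  have f: "0 \<le> 120 + 6*t^2" by simp
  have "(120 + 6*t^2) * ?L \<le> (120 + 6*t^2) * sin t" using mult_left_mono[OF s f] .
  moreover have e: "(120 + 6*t^2) * ?L = 120*t - 14*t^3 + t^7 * (11/420 - 23*t^2/15120 - t^4/60480)"
    by (simp add: eval_nat_numeral field_simps)
  moreover have "0 \<le> t^7 * (11/420 - 23*t^2/15120 - t^4/60480)"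
  proof -
    have "t^2 \<le> 3^2" using True t0 by (intro power_mono) auto
    then have t2: "t^2 \<le> 9" by simp
    have "t^4 = (t^2)^2" by simp
    also have "\<dots> \<le> 9^2" using t2 by (intro power_mono) auto
    finally have t4: "t^4 \<le> 81" by simp
    have "0 \<le> 11/420 - 23*t^2/15120 - t^4/60480" using t2 t4 by simp
    then show ?thesis using t0 by simp
  qed
  ultimately show ?thesis by linarith
next
  case False
  show ?thesis
  proof (cases "t \<le> pi")
    case True
    have "0 \<le> sin t" using t0 True by (rule sin_ge_zero)
    have "3^2 \<le> t^2" using False by (intro power_mono) auto
    then have "9 \<le> t^2" by simp
    moreover have "120*t - 14*t^3 = t*(120 - 14*t^2)" by (simp add: algebra_simps power2_eq_square power3_eq_cube)
    ultimately have "120*t - 14*t^3 \<le> 0" using t0 by (simp add: mult_nonneg_nonpos)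
    moreover have "0 \<le> (120 + 6*t^2) * sin t" using \<open>0 \<le> sin t\<close> by simp
    ultimately show ?thesis by linarith
  next
    case True': False
    have s: "sin (t - pi) \<le> t - pi" using True' by (intro sin_x_le_x) simp
    have st: "-(t - pi) \<le> sin t" using s by simp
    have f: "0 \<le> 120 + 6*t^2" by simp
    have "(120 + 6*t^2) * (-(t - pi)) \<le> (120 + 6*t^2) * sin t" using mult_left_mono[OF st f] .
    moreover have "120*t - 14*t^3 \<le> (120 + 6*t^2) * (-(t - pi))"
    proof -
      have p3: "3 \<le> pi" using pi_lo by simp
      have t3: "3 \<le> t" using False by simp
      have a: "6*pi*t^2 \<ge> 18*t^2" using p3 by (simp add: mult_right_mono)
      have b: "0 \<le> (t-3)*(8*t^2+42*t-114)" using t3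
        proof (intro mult_nonneg_nonneg)
        have "3^2 \<le> t^2" using t3 by (intro power_mono) auto
        then show "0 \<le> 8*t^2+42*t-114" using t3 by simp
      qed (use t3 in simp)
      have "(t-3)*(8*t^2+42*t-114) + 18 = 8*t^3+18*t^2-240*t+360"
        by (simp add: algebra_simps power2_eq_square power3_eq_cube)
      then show ?thesis using a b p3 by (simp add: algebra_simps power2_eq_square power3_eq_cube) 
    qed
    ultimately show ?thesis by linarith
  qed
qed

lemma lo_piece: fixes t l r c :: real
  assumes "0 \<le> l" "l \<le> t" "t \<le> r" "sin t \<le> c" "0 \<le> c" "(240 + 42*r^2)*c \<le> 240*l + 2*l^3"
  shows "(240 + 42*t^2) * sin t \<le> 240*t + 2*t^3"
proof -
  have "t^2 \<le> r^2" using assms by (intro power_mono) auto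
  then have "(240 + 42*t^2) * sin t \<le> (240 + 42*t^2) * c" using assms by (intro mult_left_mono) auto
  also have "\<dots> \<le> (240 + 42*r^2) * c" using \<open>t^2 \<le> r^2\<close> assms by (intro mult_right_mono) auto
  also have "\<dots> \<le> 240*l + 2*l^3" by fact
  also have "\<dots> \<le> 240*t + 2*t^3"
  proof -
    have "l^3 \<le> t^3" using assms by (intro power_mono) auto
    then show ?thesis using assms by linarith
  qed
  finally show ?thesis .
qed

lemma sin_3pi_piece: fixes t l :: real
  assumes "l \<le> t" "t \<le> 3*pi" "3*3.1416 - l \<le> pi/2"
  shows "sin t \<le> sin (3*3.1416 - l)"
proof -
  have "sin t = sin (3*pi - t)"
  proof -
    have "sin (3*pi - t) = sin ((pi - t) + 2*pi)" by (rule arg_cong[where f=sin]) simp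
    then show ?thesis by (simp only: sin_periodic sin_pi_minus)
  qed
  also have "\<dots> \<le> sin (3*3.1416 - l)"
    using assms pi_hi pi_lo by (intro sin_monotone_2pi_le) auto
  finally show ?thesis .
qed

lemma lo_ineq: fixes t :: real assumes t0: "0 \<le> t"
  shows "(240 + 42*t^2) * sin t \<le> 240*t + 2*t^3"
proof -
  have p1: "3.14159 \<le> pi" "pi \<le> 3.1416" using pi_lo pi_hi by auto
  consider "t \<le> pi" | "pi \<le> t" "t \<le> 2*pi" | "2*pi \<le> t" "t \<le> 8.2" | "8.2 \<le> t" "t \<le> 8.4"
    | "8.4 \<le> t" "t \<le> 8.8" | "8.8 \<le> t" "t \<le> 3*pi" | "3*pi \<le> t" "t \<le> 4*pi" | "4*pi \<le> t"
    using p1 by linarith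
  then show ?thesis
  proof cases
    case 1
    let ?U = "t - t^3/6 + t^5/120 + t^7/5040"
    have s: "sin t \<le> ?U" using sin_upper7[OF t0] .
    have f: "0 \<le> 240 + 42*t^2" by simp
    have "(240 + 42*t^2) * sin t \<le> (240 + 42*t^2) * ?U" using mult_left_mono[OF s f] .
    moreover have "(240 + 42*t^2) * ?U = 240*t + 2*t^3 - t^5 * (5 - 167*t^2/420 - t^4/120)"
      by (simp add: eval_nat_numeral field_simps)
    moreover have "0 \<le> t^5 * (5 - 167*t^2/420 - t^4/120)"
    proof -
      have "t^2 \<le> pi^2" using 1 t0 by (intro power_mono) auto
      also have "\<dots> \<le> 3.1416^2" using p1 by (intro power_mono) auto
      also have "(3.1416::real)^2 \<le> 10" by (simp add: power2_eq_square)
      finally have t2: "t^2 \<le> 10" .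
      have "t^4 = (t^2)^2" by simp
      also have "\<dots> \<le> 10^2" using t2 by (intro power_mono) auto
      finally have t4: "t^4 \<le> 100" by simp
      have "0 \<le> 5 - 167*t^2/420 - t^4/120" using t2 t4 by simp
      then show ?thesis using t0 by simp
    qed
    ultimately show ?thesis by linarith
  next
    case 2
    then have "sin t \<le> 0" by (rule sin_nonpos_pi_2pi)
    then have "(240 + 42*t^2) * sin t \<le> 0" by (simp add: mult_nonneg_nonpos)
    moreover have "0 \<le> 240*t + 2*t^3" using t0 by simp
    ultimately show ?thesis by linarith
  next
    case 3
    have t4: "4 \<le> t" using 3 pi_gt3 by linarith
    have q: "t^2 - (64/5)*t + (376/25) = (t-4)*(t-(41/5)) - (3/5)*t - (444/25)"
      by (simp add: field_simps power2_eq_square)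
    have "(t-4)*(t-(41/5)) \<le> 0" using 3 t4 by (simp add: mult_nonneg_nonpos)
    then have "t^2 - (64/5)*t + (376/25) \<le> 0" using q t4 by linarith
    then have "0 \<le> ((41/5) - t) * (-(t^2 - (64/5)*t + (376/25)))" using 3 by simp
    moreover have "((41/5) - t) * (-(t^2 - (64/5)*t + (376/25))) + (416/125) = t^3 - 21*t^2 + 120*t - 120"
      by (simp add: field_simps power2_eq_square power3_eq_cube)
    ultimately have h: "0 \<le> t^3 - 21*t^2 + 120*t - 120" by linarith
    show ?thesis by (rule lo_piece[of t t t 1]) (use t0 h in auto)
  next
    case 4
    have "sin t \<le> sin (3*3.1416 - 8.2)" using 4 p1 by (intro sin_3pi_piece) auto
    also have "\<dots> \<le> (3*3.1416 - 8.2) - (3*3.1416 - 8.2)^3/6 + (3*3.1416 - 8.2)^5/120 + (3*3.1416 - 8.2)^7/5040"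
      by (rule sin_upper7) simp
    finally have s: "sin t \<le> \<dots>" .
    show ?thesis by (rule lo_piece[of "8.2" t "8.4", OF _ _ _ s]) (use 4 in \<open>auto simp: power_divide\<close>)
  next
    case 5
    have "sin t \<le> sin (3*3.1416 - 8.4)" using 5 p1 by (intro sin_3pi_piece) auto
    also have "\<dots> \<le> (3*3.1416 - 8.4) - (3*3.1416 - 8.4)^3/6 + (3*3.1416 - 8.4)^5/120 + (3*3.1416 - 8.4)^7/5040"
      by (rule sin_upper7) simp
    finally have s: "sin t \<le> \<dots>" .
    show ?thesis by (rule lo_piece[of "8.4" t "8.8", OF _ _ _ s]) (use 5 in \<open>auto simp: power_divide\<close>)
  next
    case 6
    have "sin t \<le> sin (3*3.1416 - 8.8)" using 6 p1 by (intro sin_3pi_piece) auto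
    also have "\<dots> \<le> (3*3.1416 - 8.8) - (3*3.1416 - 8.8)^3/6 + (3*3.1416 - 8.8)^5/120 + (3*3.1416 - 8.8)^7/5040"
      by (rule sin_upper7) simp
    finally have s: "sin t \<le> \<dots>" .
    have ph: "pi \<le> 3927/1250" using pi_hi by simp
    have r: "t \<le> 9.43" using 6 ph by simp
    show ?thesis by (rule lo_piece[of "8.8" t "9.43", OF _ _ r s]) (use 6 in \<open>auto simp: power_divide\<close>)
  next
    case 7
    have "sin t = sin (t - 2*pi)"
    proof -
      have "t = (t - 2*pi) + 2*pi" by simp
      then show ?thesis by (metis sin_periodic)
    qed
    also have "\<dots> \<le> 0" using 7 by (intro sin_nonpos_pi_2pi) auto
    finally have "sin t \<le> 0" .
    then have "(240 + 42*t^2) * sin t \<le> 0" by (simp add: mult_nonneg_nonpos)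
    moreover have "0 \<le> 240*t + 2*t^3" using t0 by simp
    ultimately show ?thesis by linarith
  next
    case 8
    have t12: "12 \<le> t" using 8 pi_gt3 by linarith
    have "0 \<le> (t-12)*(t^2 - 9*t + 12)"
    proof (intro mult_nonneg_nonneg)
      have "t^2 - 9*t + 12 = t*(t-9) + 12" by (simp add: algebra_simps power2_eq_square)
      moreover have "0 \<le> t*(t-9)" using t12 by simp
      ultimately show "0 \<le> t^2 - 9*t + 12" by linarith
    qed (use t12 in simp)
    moreover have "(t-12)*(t^2 - 9*t + 12) + 24 = t^3 - 21*t^2 + 120*t - 120"
      by (simp add: algebra_simps power2_eq_square power3_eq_cube)
    ultimately have h: "0 \<le> t^3 - 21*t^2 + 120*t - 120" by linarith
    show ?thesis by (rule lo_piece[of t t t 1]) (use t0 h in auto)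
  qed
qed

definition supp_in :: "real \<Rightarrow> (real \<Rightarrow> 'a::zero) \<Rightarrow> bool" where
  "supp_in R g \<longleftrightarrow> (\<forall>x. R < \<bar>x\<bar> \<longrightarrow> g x = 0)"

lemma supp_inD: "supp_in R g \<Longrightarrow> R < \<bar>x\<bar> \<Longrightarrow> g x = 0"
  by (simp add: supp_in_def)

lemma supp_in_mono: "supp_in R g \<Longrightarrow> R \<le> R' \<Longrightarrow> supp_in R' g"
  by (simp add: supp_in_def)

lemma has_int_supp:
  fixes g :: "real \<Rightarrow> 'a::banach"
  assumes "continuous_on UNIV g" "supp_in R g"
  shows "(g has_integral integral {-R..R} g) UNIV"
proof (rule has_integral_on_superset)
  show "(g has_integral integral {-R..R} g) {-R..R}"
    using assms(1) by (intro integrable_integral integrable_continuous_interval)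
      (auto intro: continuous_on_subset)
  show "x \<notin> {-R..R} \<Longrightarrow> g x = 0" for x using assms(2) by (auto simp: supp_in_def)
qed auto

lemma int_supp_eq:
  fixes g :: "real \<Rightarrow> 'a::banach"
  assumes "continuous_on UNIV g" "supp_in R g"
  shows "integral UNIV g = integral {-R..R} g" "g integrable_on UNIV"
  using has_int_supp[OF assms] by (auto simp: integral_unique)

lemma int_supp_eq':
  fixes g :: "real \<Rightarrow> 'a::banach"
  assumes "continuous_on {-R..R} g" "supp_in R g"
  shows "(g has_integral integral {-R..R} g) UNIV"
proof (rule has_integral_on_superset)
  show "(g has_integral integral {-R..R} g) {-R..R}"
    using assms(1) by (intro integrable_integral integrable_continuous_interval)
  show "x \<notin> {-R..R} \<Longrightarrow> g x = 0" for x using assms(2) by (auto simp: supp_in_def)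
qed auto

lemma has_integral_shift:
  fixes g :: "real \<Rightarrow> 'a::banach"
  assumes "continuous_on UNIV g" "supp_in R g"
  shows "((\<lambda>x. g (x + c)) has_integral integral UNIV g) UNIV"
proof -
  have I: "(g has_integral integral UNIV g) {-R..R}"
    using has_int_supp[OF assms] int_supp_eq[OF assms]
    using assms(1) by (metis continuous_on_subset integrable_continuous_interval integrable_integral subset_UNIV)
  have "((\<lambda>x. g (1 *\<^sub>R x + c)) has_integral (integral UNIV g) /\<^sub>R 1 ^ DIM(real))
     (cbox ((-R - c) /\<^sub>R 1) ((R - c) /\<^sub>R 1))"
    using I by (subst has_integral_affinity_iff) (auto simp: cbox_interval)
  then have J: "((\<lambda>x. g (x + c)) has_integral integral UNIV g) {-R-c..R-c}"
    by (simp add: cbox_interval)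
  show ?thesis
  proof (rule has_integral_on_superset[OF J])
    show "x \<notin> {-R-c..R-c} \<Longrightarrow> g (x + c) = 0" for x
      using assms(2) by (auto simp: supp_in_def)
  qed auto
qed

lemma has_integral_scale:
  fixes g :: "real \<Rightarrow> 'a::banach"
  assumes "continuous_on UNIV g" "supp_in R g" "0 < m"
  shows "((\<lambda>x. g (m * x)) has_integral (integral UNIV g) /\<^sub>R m) UNIV"
proof -
  have I: "(g has_integral integral UNIV g) {-R..R}"
    using has_int_supp[OF assms(1,2)] int_supp_eq[OF assms(1,2)]
    using assms(1) by (metis continuous_on_subset integrable_continuous_interval integrable_integral subset_UNIV)
  have "((\<lambda>x. g (m *\<^sub>R x + 0)) has_integral (integral UNIV g) /\<^sub>R m ^ DIM(real))
     (cbox ((-R - 0) /\<^sub>R m) ((R - 0) /\<^sub>R m))"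
    using I assms(3) by (subst has_integral_affinity_iff) (auto simp: cbox_interval)
  then have J: "((\<lambda>x. g (m * x)) has_integral (integral UNIV g) /\<^sub>R m) {-R/m..R/m}"
    by (simp add: cbox_interval divide_inverse mult.commute)
  show ?thesis
  proof (rule has_integral_on_superset[OF J])
    show "x \<notin> {-R/m..R/m} \<Longrightarrow> g (m * x) = 0" for x
    proof -
      assume "x \<notin> {-R/m..R/m}"
      then have "R < \<bar>m * x\<bar>" using assms(3) by (auto simp: field_simps abs_if split: if_splits)
      then show ?thesis using assms(2) by (simp add: supp_in_def)
    qed
  qed auto
qed

definition lip :: "real \<Rightarrow> (real \<Rightarrow> real) \<Rightarrow> bool" where
  "lip L f \<longleftrightarrow> (\<forall>x y. \<bar>f x - f y\<bar> \<le> L * \<bar>x - y\<bar>)"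

lemma lip_continuous: assumes "lip L f" shows "continuous_on UNIV f"
proof -
  have L: "\<bar>f x - f y\<bar> \<le> L * \<bar>x - y\<bar>" for x y using assms by (simp add: lip_def)
  show ?thesis
  unfolding continuous_on_iff
  proof (intro ballI allI impI)
    fix x and e :: real assume e: "0 < e"
    show "\<exists>d>0. \<forall>x'\<in>UNIV. dist x' x < d \<longrightarrow> dist (f x') (f x) < e"
    proof (cases "L \<le> 0")
      case True
      have "\<bar>f x' - f x\<bar> < e" for x'
      proof -
        have "L * \<bar>x' - x\<bar> \<le> 0" using True by (simp add: mult_nonpos_nonneg)
        then show ?thesis using L[of x' x] e by linarith
      qed
      then show ?thesis by (intro exI[of _ 1]) (auto simp: dist_real_def)
    next
      case False
      show ?thesis
      proof (intro exI[of _ "e / L"] conjI ballI impI)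
        show "0 < e / L" using False e by simp
        fix x' assume "dist x' x < e / L"
        then have "L * \<bar>x' - x\<bar> < e" using False by (simp add: dist_real_def field_simps)
        then show "dist (f x') (f x) < e" using L[of x' x] by (simp add: dist_real_def)
      qed
    qed
  qed
qed

definition etahat :: "real \<Rightarrow> real" where
  "etahat s = (if s = 0 then 1 else 6 * (s - sin s) / s^3)"

lemma eta_alt: "eta x = 3/2 * (max 0 (1 - \<bar>x\<bar>))^2"
  by (simp add: eta_def max_def)

lemma eta_cont: "continuous_on UNIV eta"
  unfolding eta_alt[abs_def] by (intro continuous_intros)

lemma eta_supp: "supp_in 1 eta"
  by (simp add: supp_in_def eta_def)

lemma eta_nonneg: "0 \<le> eta x"
  by (simp add: eta_def)

lemma eta_even: "eta (-x) = eta x"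
  by (simp add: eta_def)

lemma eta_lip: "lip 3 eta"
  unfolding lip_def
proof (intro allI)
  fix x y :: real
  define p where "p = max 0 (1 - \<bar>x\<bar>)"
  define q where "q = max 0 (1 - \<bar>y\<bar>)"
  have p: "0 \<le> p" "p \<le> 1" and q: "0 \<le> q" "q \<le> 1" by (auto simp: p_def q_def)
  have pq: "\<bar>p - q\<bar> \<le> \<bar>x - y\<bar>" unfolding p_def q_def by (auto simp: max_def abs_if)
  have "eta x - eta y = 3/2 * (p^2 - q^2)"
    by (simp add: eta_alt p_def q_def algebra_simps)
  then have "\<bar>eta x - eta y\<bar> = \<bar>3/2 * (p^2 - q^2)\<bar>" by (simp only:)
  also have "\<dots> = 3/2 * \<bar>p^2 - q^2\<bar>" by (simp only: abs_mult)
  also have "p^2 - q^2 = (p - q) * (p + q)" by (simp add: algebra_simps power2_eq_square)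
  also have "\<bar>(p - q) * (p + q)\<bar> = \<bar>p - q\<bar> * (p + q)" using p q by (simp add: abs_mult)
  also have "\<dots> \<le> \<bar>x - y\<bar> * 2" using p q pq by (intro mult_mono) auto
  finally show "\<bar>eta x - eta y\<bar> \<le> 3 * \<bar>x - y\<bar>" by simp
qed

lemma eta_ftc: "((\<lambda>x. 3 * cos (k * x) * (1 - x)^2) has_integral etahat k) {0..1}"
proof (cases "k = 0")
  case True
  define G where "G u = - ((1 - u)^3)" for u :: real
  have "((\<lambda>x. 3 * (1 - x)^2) has_integral (G 1 - G 0)) {0..1}"
    unfolding G_def by (intro fundamental_theorem_of_calculus)
      (auto intro!: derivative_eq_intros simp: has_real_derivative_iff_has_vector_derivative[symmetric] power2_eq_square)
  then show ?thesis using True by (simp add: etahat_def G_def)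
next
  case False
  define F where "F u = 3 * ((1-u)^2 * sin (k*u) / k - 2*(1-u)*cos (k*u) / k^2 - 2 * sin (k*u) / k^3)" for u
  have d: "(F has_real_derivative 3 * cos (k * x) * (1 - x)^2) (at x)" for x
    using False unfolding F_def[abs_def]
    by (auto intro!: derivative_eq_intros simp: field_simps power2_eq_square power3_eq_cube)
  have "((\<lambda>x. 3 * cos (k * x) * (1 - x)^2) has_integral (F 1 - F 0)) {0..1}"
    using d by (intro fundamental_theorem_of_calculus)
      (auto simp: has_real_derivative_iff_has_vector_derivative[symmetric] intro: has_field_derivative_at_within)
  moreover have "F 1 - F 0 = etahat k"
    using False by (simp add: F_def etahat_def field_simps power2_eq_square power3_eq_cube)
  ultimately show ?thesis by simp
qed

lemma fourier_eta: "fourier eta k = complex_of_real (etahat k)"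
proof -
  define H where "H x = exp (- \<i> * complex_of_real (k * x)) * complex_of_real (eta x)" for x
  have Hc: "continuous_on UNIV H"
    unfolding H_def[abs_def] by (intro continuous_intros continuous_on_compose2[OF eta_cont]) auto
  have Hs: "supp_in 1 H" using eta_supp by (simp add: supp_in_def H_def)
  obtain I1 where I1: "(H has_integral I1) {-1..0}"
    using Hc by (meson continuous_on_subset integrable_continuous_interval integrable_integral subset_UNIV)
  obtain I2 where I2: "(H has_integral I2) {0..1}"
    using Hc by (meson continuous_on_subset integrable_continuous_interval integrable_integral subset_UNIV)
  have I1': "((\<lambda>x. H (-x)) has_integral I1) {0..1}"
    using I1 has_integral_reflect_real[where f=H and i=I1 and a="-1" and b=0] by simp
  have "((\<lambda>x. H x + H (-x)) has_integral I2 + I1) {0..1}"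
    by (rule has_integral_add[OF I2 I1'])
  moreover have "((\<lambda>x. H x + H (-x)) has_integral complex_of_real (etahat k)) {0..1}"
  proof -
    have "((\<lambda>x. complex_of_real (3 * cos (k * x) * (1 - x)^2)) has_integral complex_of_real (etahat k)) {0..1}"
      using has_integral_linear[OF eta_ftc bounded_linear_of_real] by (simp add: o_def)
    moreover have "H x + H (-x) = complex_of_real (3 * cos (k * x) * (1 - x)^2)" if "x \<in> {0..1}" for x
    proof -
      have "H x + H (-x) = (exp (- \<i> * complex_of_real (k * x)) + exp (\<i> * complex_of_real (k * x))) * complex_of_real (eta x)"
        by (simp add: H_def eta_even algebra_simps)
      also have "exp (- \<i> * complex_of_real (k * x)) + exp (\<i> * complex_of_real (k * x)) = complex_of_real (2 * cos (k*x))"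
        by (simp add: cos_exp_eq cos_of_real[symmetric] algebra_simps)
      finally show ?thesis using that by (simp add: eta_def)
    qed
    ultimately show ?thesis by (subst has_integral_cong) auto
  qed
  ultimately have e: "I2 + I1 = complex_of_real (etahat k)" by (rule has_integral_unique)
  have "(H has_integral I1 + I2) {-1..1}" by (rule has_integral_combine[OF _ _ I1 I2]) auto
  then have "(H has_integral I1 + I2) UNIV"
    by (rule has_integral_on_superset) (use Hs in \<open>auto simp: supp_in_def\<close>)
  then have "fourier eta k = I1 + I2" unfolding fourier_def H_def[symmetric] by (rule integral_unique)
  then show ?thesis using e by (simp add: add.commute)
qed

lemma has_int_real_of:
  fixes f :: "real \<Rightarrow> real"
  assumes "(f has_integral I) S"
  shows "((\<lambda>x. complex_of_real (f x)) has_integral complex_of_real I) S"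
  using has_integral_linear[OF assms bounded_linear_of_real] by (simp add: o_def)

lemma has_integral_reflect_UNIV:
  fixes g :: "real \<Rightarrow> 'a::banach"
  assumes "continuous_on UNIV g" "supp_in R g"
  shows "((\<lambda>x. g (- x)) has_integral integral UNIV g) UNIV"
proof -
  have I: "(g has_integral integral UNIV g) {-R..R}"
    using has_int_supp[OF assms] int_supp_eq[OF assms]
    using assms(1) by (metis continuous_on_subset integrable_continuous_interval integrable_integral subset_UNIV)
  have J: "((\<lambda>x. g (- x)) has_integral integral UNIV g) {-R..R}"
    using I has_integral_reflect_real[where f=g and a="-R" and b=R] by simp
  show ?thesis
    by (rule has_integral_on_superset[OF J]) (use assms(2) in \<open>auto simp: supp_in_def\<close>)
qed

lemma eta_scaled_cont: "0 < c \<Longrightarrow> continuous_on UNIV (eta_scaled c)"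
  unfolding eta_scaled_def[abs_def]
  by (intro continuous_intros continuous_on_compose2[OF eta_cont]) auto

lemma eta_scaled_supp: "0 < c \<Longrightarrow> supp_in c (eta_scaled c)"
  by (auto simp: supp_in_def eta_scaled_def eta_def abs_div field_simps)

lemma eta_scaled_nonneg: "0 < c \<Longrightarrow> 0 \<le> eta_scaled c x"
  by (simp add: eta_scaled_def eta_nonneg)

lemma eta_scaled_lip: assumes "0 < c" shows "lip (3 / c^2) (eta_scaled c)"
  unfolding lip_def
proof (intro allI)
  fix x y
  have "\<bar>eta_scaled c x - eta_scaled c y\<bar> = (1/c) * \<bar>eta (x/c) - eta (y/c)\<bar>"
  proof -
    have "eta_scaled c x - eta_scaled c y = (1/c) * (eta (x/c) - eta (y/c))"
      by (simp add: eta_scaled_def algebra_simps)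
    then show ?thesis using assms by (simp only: abs_mult) simp
  qed
  also have "\<dots> \<le> (1/c) * (3 * \<bar>x/c - y/c\<bar>)"
    using eta_lip assms by (intro mult_left_mono) (auto simp: lip_def)
  also have "\<dots> = 3 / c^2 * \<bar>x - y\<bar>"
    using assms by (simp add: field_simps power2_eq_square abs_div flip: diff_divide_distrib)
  finally show "\<bar>eta_scaled c x - eta_scaled c y\<bar> \<le> 3 / c^2 * \<bar>x - y\<bar>" .
qed

lemma fourier_eta_scaled: assumes c: "0 < c"
  shows "fourier (eta_scaled c) k = complex_of_real (etahat (c * k))"
proof -
  define G where "G u = exp (- \<i> * complex_of_real ((c * k) * u)) * complex_of_real (eta u)" for u
  have Gc: "continuous_on UNIV G"
    unfolding G_def[abs_def] by (intro continuous_intros continuous_on_compose2[OF eta_cont]) auto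
  have Gs: "supp_in 1 G" using eta_supp by (simp add: supp_in_def G_def)
  have "((\<lambda>x. G ((1/c) * x)) has_integral (integral UNIV G) /\<^sub>R (1/c)) UNIV"
    using c by (intro has_integral_scale[OF Gc Gs]) auto
  then have "((\<lambda>x. complex_of_real (1/c) * G ((1/c) * x)) has_integral complex_of_real (1/c) * ((integral UNIV G) /\<^sub>R (1/c))) UNIV"
    by (rule has_integral_mult_right)
  moreover have "complex_of_real (1/c) * ((integral UNIV G) /\<^sub>R (1/c)) = integral UNIV G"
    using c by (simp add: scaleR_conv_of_real)
  moreover have "(\<lambda>x. complex_of_real (1/c) * G ((1/c) * x)) =
     (\<lambda>x. exp (- \<i> * complex_of_real (k * x)) * complex_of_real (eta_scaled c x))"
    using c by (auto simp: G_def eta_scaled_def fun_eq_iff)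
  ultimately have "fourier (eta_scaled c) k = integral UNIV G"
    unfolding fourier_def by (metis integral_unique)
  also have "\<dots> = fourier eta (c * k)" unfolding fourier_def G_def by simp
  finally show ?thesis by (simp add: fourier_eta)
qed

lemma integral_eta_scaled: assumes c: "0 < c"
  shows "(eta_scaled c has_integral 1) UNIV"
proof -
  have "fourier (eta_scaled c) 0 = 1" using fourier_eta_scaled[OF c] by (simp add: etahat_def)
  then have *: "integral UNIV (\<lambda>x. complex_of_real (eta_scaled c x)) = 1" by (simp add: fourier_def)
  have h: "(eta_scaled c has_integral integral UNIV (eta_scaled c)) UNIV"
    using int_supp_eq(2)[OF eta_scaled_cont[OF c] eta_scaled_supp[OF c]] by (rule integrable_integral)
  have "integral UNIV (\<lambda>x. complex_of_real (eta_scaled c x)) = complex_of_real (integral UNIV (eta_scaled c))"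
    using has_int_real_of[OF h] by (rule integral_unique)
  then have "integral UNIV (eta_scaled c) = 1" using * by simp
  then show ?thesis using h by simp
qed

lemma hnb:
  fixes f :: "'a::euclidean_space \<Rightarrow> 'b::banach"
  assumes "(f has_integral i) S" "(g has_integral j) S" "\<And>x. x \<in> S \<Longrightarrow> norm (f x) \<le> g x"
  shows "norm i \<le> j"
  using integral_norm_bound_integral[of f S g] assms by (auto simp: integral_unique has_integral_integrable)

locale convsetup =
  fixes f h :: "real \<Rightarrow> real" and Lf S T :: real
  assumes flip: "lip Lf f" and fsupp: "supp_in S f"
    and hcont: "continuous_on UNIV h" and hsupp: "supp_in T h"
    and hnonneg: "\<And>x. 0 \<le> h x" and hint: "(h has_integral 1) UNIV"
begin

lemma fcont: "continuous_on UNIV f" using flip by (rule lip_continuous)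

lemma flipD: "\<bar>f x - f y\<bar> \<le> Lf * \<bar>x - y\<bar>" using flip by (simp add: lip_def)

lemma integrand_cont: "continuous_on UNIV (\<lambda>y. f y * h (x - y))"
  by (intro continuous_intros fcont continuous_on_compose2[OF hcont]) auto

lemma integrand_supp: "supp_in S (\<lambda>y. f y * h (x - y))"
  using fsupp by (simp add: supp_in_def)

lemma conv_has: "((\<lambda>y. f y * h (x - y)) has_integral conv f h x) UNIV"
  unfolding conv_def using int_supp_eq(2)[OF integrand_cont integrand_supp]
  by (rule integrable_integral)

lemma conv_box: "conv f h x = integral {-S..S} (\<lambda>y. f y * h (x - y))"
  unfolding conv_def by (rule int_supp_eq(1)[OF integrand_cont integrand_supp])

lemma conv_alt_has: "((\<lambda>y. f (x - y) * h y) has_integral conv f h x) UNIV"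
proof -
  define chi where "chi z = f (- z) * h (x - - z)" for z
  have cc: "continuous_on UNIV chi"
    unfolding chi_def[abs_def]
    by (intro continuous_intros continuous_on_compose2[OF hcont] continuous_on_compose2[OF fcont]) auto
  have cs: "supp_in S chi" using fsupp by (simp add: supp_in_def chi_def)
  have "((\<lambda>z. (\<lambda>y. f y * h (x - y)) (- z)) has_integral conv f h x) UNIV"
    using has_integral_reflect_UNIV[OF integrand_cont integrand_supp] unfolding conv_def .
  then have i1: "integral UNIV chi = conv f h x" unfolding chi_def by (simp add: integral_unique)
  have "((\<lambda>y. chi (y + - x)) has_integral integral UNIV chi) UNIV"
    by (rule has_integral_shift[OF cc cs])
  then show ?thesis using i1 by (simp add: chi_def)
qed

lemma conv_supp: "supp_in (S + T) (conv f h)"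
  unfolding supp_in_def
proof (intro allI impI)
  fix x assume x: "S + T < \<bar>x\<bar>"
  have "f y * h (x - y) = 0" for y
  proof (cases "S < \<bar>y\<bar>")
    case True then show ?thesis using fsupp by (simp add: supp_in_def)
  next
    case False
    then have "T < \<bar>x - y\<bar>" using x by linarith
    then show ?thesis using hsupp by (simp add: supp_in_def)
  qed
  then have "(\<lambda>y. f y * h (x - y)) = (\<lambda>y. 0)" by auto
  then show "conv f h x = 0" by (simp add: conv_def)
qed

lemma conv_lip: "lip Lf (conv f h)"
  unfolding lip_def
proof (intro allI)
  fix x x'
  have d: "((\<lambda>y. f (x - y) * h y - f (x' - y) * h y) has_integral conv f h x - conv f h x') UNIV"
    by (intro has_integral_diff conv_alt_has)
  have b: "((\<lambda>y. Lf * \<bar>x - x'\<bar> * h y) has_integral Lf * \<bar>x - x'\<bar> * 1) UNIV"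
    by (intro has_integral_mult_right hint)
  have "norm (conv f h x - conv f h x') \<le> Lf * \<bar>x - x'\<bar> * 1"
  proof (rule hnb[OF d b])
    fix y
    have "\<bar>f (x - y) * h y - f (x' - y) * h y\<bar> = \<bar>f (x - y) - f (x' - y)\<bar> * h y"
      using hnonneg[of y] by (simp add: abs_mult flip: left_diff_distrib)
    also have "\<dots> \<le> Lf * \<bar>x - x'\<bar> * h y"
      using flipD[of "x - y" "x' - y"] hnonneg[of y] by (intro mult_right_mono) auto
    finally show "norm (f (x - y) * h y - f (x' - y) * h y) \<le> Lf * \<bar>x - x'\<bar> * h y" by simp
  qed
  then show "\<bar>conv f h x - conv f h x'\<bar> \<le> Lf * \<bar>x - x'\<bar>" by simp
qed

lemma conv_cont: "continuous_on UNIV (conv f h)"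
  using conv_lip by (rule lip_continuous)

lemma conv_close: "\<bar>conv f h x - f x\<bar> \<le> Lf * T"
proof -
  have d: "((\<lambda>y. f (x - y) * h y - f x * h y) has_integral conv f h x - f x * 1) UNIV"
    by (intro has_integral_diff conv_alt_has has_integral_mult_right hint)
  have b: "((\<lambda>y. Lf * T * h y) has_integral Lf * T * 1) UNIV"
    by (intro has_integral_mult_right hint)
  have "norm (conv f h x - f x * 1) \<le> Lf * T * 1"
  proof (rule hnb[OF d b])
    fix y
    have "\<bar>f (x - y) * h y - f x * h y\<bar> = \<bar>f (x - y) - f x\<bar> * h y"
      using hnonneg[of y] by (simp add: abs_mult flip: left_diff_distrib)
    also have "\<dots> \<le> Lf * T * h y"
    proof (cases "T < \<bar>y\<bar>")
      case True then show ?thesis using hsupp by (simp add: supp_in_def)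
    next
      case False
      have "\<bar>f (x - y) - f x\<bar> \<le> Lf * \<bar>y\<bar>" using flipD[of "x - y" x] by simp
      also have "\<dots> \<le> Lf * T"
      proof -
        have "0 \<le> Lf" using flipD[of 1 0] by (simp add: zero_le_mult_iff)
        then show ?thesis using False by (intro mult_left_mono) auto
      qed
      finally show ?thesis using hnonneg[of y] by (intro mult_right_mono) auto
    qed
    finally show "norm (f (x - y) * h y - f x * h y) \<le> Lf * T * h y" by simp
  qed
  then show ?thesis by simp
qed

end

definition EE :: "real \<Rightarrow> real \<Rightarrow> complex" where
  "EE k x = exp (- \<i> * complex_of_real (k * x))"

lemma EE_cont: "continuous_on UNIV (EE k)"
  unfolding EE_def[abs_def] by (intro continuous_intros)

lemma EE_add: "EE k (u + y) = EE k u * EE k y"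
  by (simp add: EE_def distrib_left algebra_simps flip: exp_add)

lemma fourier_EE: "fourier f k = integral UNIV (\<lambda>x. EE k x * complex_of_real (f x))"
  by (simp add: fourier_def EE_def)

lemma fourier_has:
  assumes "continuous_on UNIV f" "supp_in R f"
  shows "((\<lambda>x. EE k x * complex_of_real (f x)) has_integral fourier f k) UNIV"
    "fourier f k = integral {-R..R} (\<lambda>x. EE k x * complex_of_real (f x))"
proof -
  have c: "continuous_on UNIV (\<lambda>x. EE k x * complex_of_real (f x))"
    by (intro continuous_intros EE_cont continuous_on_compose2[OF assms(1)]) auto
  have s: "supp_in R (\<lambda>x. EE k x * complex_of_real (f x))" using assms(2) by (simp add: supp_in_def)
  show "((\<lambda>x. EE k x * complex_of_real (f x)) has_integral fourier f k) UNIV"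
    unfolding fourier_EE by (rule integrable_integral int_supp_eq(2)[OF c s])+
  show "fourier f k = integral {-R..R} (\<lambda>x. EE k x * complex_of_real (f x))"
    unfolding fourier_EE by (rule int_supp_eq(1)[OF c s])
qed

context convsetup begin

lemma fourier_conv: "fourier (conv f h) k = fourier f k * fourier h k"
proof -
  define R where "R = S + T"
  define F where "F x y = EE k x * complex_of_real (f y * h (x - y))" for x y
  have Fc: "continuous_on UNIV (\<lambda>(x, y). F x y)"
    unfolding F_def case_prod_unfold
    by (intro continuous_intros continuous_on_compose2[OF EE_cont] continuous_on_compose2[OF fcont]
        continuous_on_compose2[OF hcont]) auto
  have step1: "fourier (conv f h) k = integral {-R..R} (\<lambda>x. EE k x * complex_of_real (conv f h x))"
    unfolding R_def by (rule fourier_has(2)[OF conv_cont conv_supp])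
  have step2: "EE k x * complex_of_real (conv f h x) = integral {-S..S} (F x)" for x
  proof -
    have "(\<lambda>y. f y * h (x - y)) integrable_on {-S..S}"
      by (intro integrable_continuous_interval continuous_on_subset[OF integrand_cont]) auto
    then have "integral {-S..S} (complex_of_real \<circ> (\<lambda>y. f y * h (x - y))) = complex_of_real (integral {-S..S} (\<lambda>y. f y * h (x - y)))"
      by (rule integral_linear[OF _ bounded_linear_of_real])
    then have "complex_of_real (conv f h x) = integral {-S..S} (\<lambda>y. complex_of_real (f y * h (x - y)))"
      unfolding conv_box o_def by (rule sym)
    then show ?thesis unfolding F_def by (simp only: integral_mult_right)
  qed
  have step3: "integral {-R..R} (\<lambda>x. integral {-S..S} (F x)) = integral {-S..S} (\<lambda>y. integral {-R..R} (\<lambda>x. F x y))"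
    using integral_swap_continuous[of "-R" "-S" R S F] continuous_on_subset[OF Fc]
    by (simp add: cbox_interval)
  have step4: "integral {-R..R} (\<lambda>x. F x y) = EE k y * complex_of_real (f y) * fourier h k"
    if y: "y \<in> {-S..S}" for y
  proof -
    define Psi where "Psi u = EE k u * complex_of_real (h u)" for u
    have Pc: "continuous_on UNIV Psi" unfolding Psi_def[abs_def]
      by (intro continuous_intros EE_cont continuous_on_compose2[OF hcont]) auto
    have Ps: "supp_in T Psi" using hsupp by (simp add: supp_in_def Psi_def)
    define Phi where "Phi x = EE k y * Psi (x + - y)" for x
    have Phi_eq: "F x y = complex_of_real (f y) * Phi x" for x
      unfolding F_def Phi_def Psi_def using EE_add[of k "x - y" y] by simp
    have "((\<lambda>x. Psi (x + - y)) has_integral fourier h k) UNIV"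
      using has_integral_shift[OF Pc Ps, of "-y"] by (simp add: Psi_def[abs_def] fourier_EE)
    then have hP: "(Phi has_integral EE k y * fourier h k) UNIV"
      unfolding Phi_def by (rule has_integral_mult_right)
    have Phic: "continuous_on UNIV Phi" unfolding Phi_def
      by (intro continuous_intros continuous_on_compose2[OF Pc]) auto
    have Phis: "supp_in R Phi" unfolding supp_in_def Phi_def
    proof (intro allI impI)
      fix x assume "R < \<bar>x\<bar>"
      then have "T < \<bar>x + - y\<bar>" using y by (auto simp: R_def)
      then show "EE k y * Psi (x + - y) = 0" using Ps by (simp add: supp_in_def)
    qed
    have "integral {-R..R} Phi = EE k y * fourier h k"
      using int_supp_eq(1)[OF Phic Phis] hP by (simp add: integral_unique)
    then show ?thesis unfolding Phi_eq integral_mult_right by simp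
  qed
  have "fourier (conv f h) k = integral {-S..S} (\<lambda>y. integral {-R..R} (\<lambda>x. F x y))"
    using step1 step2 step3 by simp
  also have "\<dots> = integral {-S..S} (\<lambda>y. EE k y * complex_of_real (f y) * fourier h k)"
    using step4 by (intro integral_cong) auto
  also have "\<dots> = integral {-S..S} (\<lambda>y. EE k y * complex_of_real (f y)) * fourier h k"
    by (rule integral_mult_left)
  also have "\<dots> = fourier f k * fourier h k"
    using fourier_has(2)[OF fcont fsupp] by simp
  finally show ?thesis .
qed

end

lemma etahat_even: "etahat (-t) = etahat t"
  by (simp add: etahat_def field_simps)

lemma etahat_bounds_pos: assumes t: "0 < t"
  shows "1 / (1 + 7/40 * t^2) \<le> etahat t" "etahat t \<le> 1 / (1 + t^2/20)"
proof -
  have e: "etahat t = 6 * (t - sin t) / t^3" using t by (simp add: etahat_def)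
  have t3: "0 < t^3" using t by simp
  have lo: "(240 + 42*t^2) * sin t \<le> 240*t + 2*t^3" using lo_ineq t by simp
  have hi: "120*t - 14*t^3 \<le> (120 + 6*t^2) * sin t" using hi_ineq t by simp
  have q1: "0 < 1 + 7/40 * t^2" "0 < 1 + t^2/20" by (auto intro: add_pos_nonneg)
  have id1: "40 * (6*(t - sin t)*(1 + 7/40*t^2) - t^3) = (240*t + 2*t^3) - (240 + 42*t^2) * sin t"
    by (simp add: field_simps power2_eq_square power3_eq_cube)
  have "t^3 \<le> 6*(t - sin t)*(1 + 7/40*t^2)"
  proof -
    define N where "N = 6*(t - sin t)*(1 + 7/40*t^2)"
    define M where "M = (240 + 42*t^2) * sin t"
    define P where "P = 240*t + 2*t^3"
    have a: "40 * (N - t^3) = P - M" "M \<le> P" using id1 lo by (simp_all add: N_def M_def P_def)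
    have "t^3 \<le> N" using a by argo
    then show ?thesis by (simp add: N_def)
  qed
  then show "1 / (1 + 7/40 * t^2) \<le> etahat t" unfolding e using q1 t3
    by (simp add: divide_simps mult.commute)
  have id2: "20 * (t^3 - 6*(t - sin t)*(1 + t^2/20)) = (120 + 6*t^2) * sin t - (120*t - 14*t^3)"
    by (simp add: field_simps power2_eq_square power3_eq_cube)
  have "6*(t - sin t)*(1 + t^2/20) \<le> t^3"
  proof -
    define N where "N = 6*(t - sin t)*(1 + t^2/20)"
    define M where "M = (120 + 6*t^2) * sin t"
    define P where "P = 120*t - 14*t^3"
    have a: "20 * (t^3 - N) = M - P" "P \<le> M" using id2 hi by (simp_all add: N_def M_def P_def)
    have "N \<le> t^3" using a by argo
    then show ?thesis by (simp add: N_def)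
  qed
  then show "etahat t \<le> 1 / (1 + t^2/20)" unfolding e using q1 t3
    by (simp add: divide_simps mult.commute)
qed

lemma etahat_bounds: fixes t :: real
  shows "1 / (1 + 7/40 * t^2) \<le> etahat t" "etahat t \<le> 1 / (1 + t^2/20)"
proof -
  consider "t = 0" | "0 < t" | "0 < -t" by linarith
  then have "1 / (1 + 7/40 * t^2) \<le> etahat t \<and> etahat t \<le> 1 / (1 + t^2/20)"
  proof cases
    case 1 then show ?thesis by (simp add: etahat_def)
  next
    case 2 then show ?thesis using etahat_bounds_pos by auto
  next
    case 3 then show ?thesis using etahat_bounds_pos[OF 3] by (simp add: etahat_even)
  qed
  then show "1 / (1 + 7/40 * t^2) \<le> etahat t" "etahat t \<le> 1 / (1 + t^2/20)" by auto
qed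

lemma ln_sq_le_abs: fixes x :: real shows "ln (1 + x^2) \<le> \<bar>x\<bar>"
proof -
  define s where "s = \<bar>x\<bar>"
  have s0: "0 \<le> s" by (simp add: s_def)
  have "(\<lambda>s. s - ln (1 + s^2)) 0 \<le> (\<lambda>s. s - ln (1 + s^2)) s"
  proof (rule DERIV_nonneg_imp_nondecreasing[OF s0])
    fix y :: real assume "0 \<le> y" "y \<le> s"
    have p: "0 < 1 + y^2" by (simp add: add_pos_nonneg)
    have "DERIV (\<lambda>s. s - ln (1 + s^2)) y :> 1 - (2 * y) / (1 + y^2)"
      using p by (auto intro!: derivative_eq_intros simp: power2_eq_square)
    moreover have "0 \<le> 1 - (2 * y) / (1 + y^2)"
    proof -
      have "2 * y \<le> 1 + y^2" using sum_squares_ge_zero[of "y - 1" 0] by (simp add: power2_eq_square algebra_simps)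
      then show ?thesis using p by (simp add: field_simps)
    qed
    ultimately show "\<exists>d. DERIV (\<lambda>s. s - ln (1 + s^2)) y :> d \<and> 0 \<le> d" by blast
  qed
  then show ?thesis by (simp add: s_def)
qed

lemma ln_sq_le_sq: fixes x :: real shows "ln (1 + x^2) \<le> x^2"
  by (rule ln_add_one_self_le_self) simp

lemma one_plus_sq_ne: fixes c x :: real shows "1 + c^2 * x^2 \<noteq> 0"
  by (smt (verit) zero_le_mult_iff zero_le_power2)

lemma ln_sq_nonneg: fixes x :: real shows "0 \<le> ln (1 + x^2)"
  by simp

locale Aseq =
  fixes a :: "nat \<Rightarrow> real"
  assumes pos: "\<And>n. a n > 0" and summ: "summable a"
begin

definition u :: "nat \<Rightarrow> real \<Rightarrow> real" where "u n k = ln (1 + (a n)^2 * k^2)"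

lemma u_alt: "u n k = ln (1 + (a n * k)^2)" by (simp add: u_def power_mult_distrib)

lemma u_nonneg: "0 \<le> u n k" by (simp add: u_def)

lemma u_le: "u n k \<le> a n * \<bar>k\<bar>"
  using ln_sq_le_abs[of "a n * k"] pos[of n] by (simp add: u_alt abs_mult)

lemma u_le2: "u n k \<le> (a n)^2 * k^2"
  using ln_sq_le_sq[of "a n * k"] by (simp add: u_alt power_mult_distrib)

lemma summable_u: "summable (\<lambda>n. u n k)"
  by (rule summable_comparison_test[where g="\<lambda>n. a n * \<bar>k\<bar>"])
    (use u_le u_nonneg summable_mult2[OF summ] in auto)

lemma A_fun_u: "A_fun a k = (\<Sum>n. u n k)" by (simp add: A_fun_def u_def)
lemma A_partial_u: "A_partial a N k = (\<Sum>n<N. u n k)" by (simp add: A_partial_def u_def)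

lemma A_sums: "(\<lambda>N. A_partial a N k) \<longlonglongrightarrow> A_fun a k"
  unfolding A_fun_u A_partial_u using summable_u by (rule summable_LIMSEQ)

lemma unif: "compact K \<Longrightarrow> uniform_limit K (A_partial a) (A_fun a) sequentially"
proof -
  assume "compact K"
  then obtain B where B: "\<And>x. x \<in> K \<Longrightarrow> \<bar>x\<bar> \<le> B"
    by (metis bounded_iff compact_imp_bounded real_norm_def)
  have "uniform_limit K (\<lambda>N x. \<Sum>i<N. u i x) (\<lambda>x. \<Sum>i. u i x) sequentially"
  proof (rule Weierstrass_m_test)
    show "norm (u n x) \<le> a n * \<bar>B\<bar>" if "x \<in> K" for n x
    proof -
      have "u n x \<le> a n * \<bar>x\<bar>" by (rule u_le)
      also have "\<dots> \<le> a n * \<bar>B\<bar>" using B[OF that] pos[of n] by (intro mult_left_mono) auto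
      finally show ?thesis using u_nonneg by simp
    qed
    show "summable (\<lambda>n. a n * \<bar>B\<bar>)" by (rule summable_mult2[OF summ])
  qed
  moreover have "(\<lambda>N x. \<Sum>i<N. u i x) = A_partial a" by (simp add: fun_eq_iff A_partial_u)
  moreover have "(\<lambda>x. \<Sum>i. u i x) = A_fun a" by (simp add: fun_eq_iff A_fun_u)
  ultimately show ?thesis by simp
qed

lemma A_cont: "continuous_on UNIV (A_fun a)"
proof -
  have "isCont (A_fun a) x" for x
  proof -
    have "continuous_on (cball x 1) (A_fun a)"
    proof (rule uniform_limit_theorem[OF _ unif])
      show "\<forall>\<^sub>F n in sequentially. continuous_on (cball x 1) (A_partial a n)"
        unfolding A_partial_def by (intro always_eventually allI continuous_intros)
          (auto simp: one_plus_sq_ne)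
    qed auto
    then have "continuous_on (ball x 1) (A_fun a)" by (rule continuous_on_subset) auto
    then show ?thesis by (simp add: continuous_on_eq_continuous_at)
  qed
  then show ?thesis by (simp add: continuous_at_imp_continuous_on)
qed

lemma A_nonneg: "0 \<le> A_fun a k"
  unfolding A_fun_u by (intro suminf_nonneg summable_u u_nonneg)

lemma A_le: "A_fun a k \<le> suminf a * \<bar>k\<bar>"
proof -
  have "(\<Sum>n. u n k) \<le> (\<Sum>n. a n * \<bar>k\<bar>)"
    by (intro suminf_le u_le summable_u summable_mult2 summ)
  also have "\<dots> = suminf a * \<bar>k\<bar>" by (rule suminf_mult2[OF summ, symmetric])
  finally show ?thesis by (simp add: A_fun_u)
qed

lemma A_even: "A_fun a (- k) = A_fun a k" by (simp add: A_fun_def)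

lemma A_smono: "strict_mono_on {0..} (A_fun a)"
proof (rule strict_mono_onI)
  fix x y :: real assume x: "x \<in> {0..}" and y: "y \<in> {0..}" and xy: "x < y"
  have m: "u n x \<le> u n y" for n
  proof -
    have "(a n)^2 * x^2 \<le> (a n)^2 * y^2" using x y xy by (intro mult_left_mono power_mono) auto
    then show ?thesis unfolding u_def by (subst ln_le_cancel_iff) (auto intro: add_pos_nonneg)
  qed
  have s: "u 0 x < u 0 y"
  proof -
    have "x^2 < y^2" using x y xy by (intro power_strict_mono) auto
    then have "(a 0)^2 * x^2 < (a 0)^2 * y^2" using pos[of 0] by simp
    then show ?thesis unfolding u_def by (subst ln_less_cancel_iff) (auto intro: add_pos_nonneg)
  qed
  have "0 < (\<Sum>n. u n y - u n x)"
    by (rule suminf_pos2[where i=0]) (use m s summable_u in \<open>auto intro: summable_diff\<close>)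
  also have "(\<Sum>n. u n y - u n x) = A_fun a y - A_fun a x"
    unfolding A_fun_u by (rule suminf_diff[OF summable_u summable_u, symmetric])
  finally show "A_fun a x < A_fun a y" by simp
qed

lemma A_top: "filterlim (A_fun a) at_top at_top"
proof (rule filterlim_at_top_mono)
  have c: "0 < a 0" by (rule pos)
  show "filterlim (\<lambda>k. ln (1 + (a 0)^2 * k^2)) at_top at_top" using c by real_asymp
  show "\<forall>\<^sub>F k in at_top. ln (1 + (a 0)^2 * k^2) \<le> A_fun a k"
  proof (intro always_eventually allI)
    fix k
    have "sum (\<lambda>n. u n k) {0} \<le> (\<Sum>n. u n k)"
      by (rule sum_le_suminf) (auto intro: summable_u u_nonneg)
    then show "ln (1 + (a 0)^2 * k^2) \<le> A_fun a k" by (simp add: A_fun_u u_def)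
  qed
qed

lemma A_div_top: "((\<lambda>k. A_fun a k / \<bar>k\<bar>) \<longlongrightarrow> 0) at_top"
proof -
  have t: "((\<lambda>k. u n k / \<bar>k\<bar>) \<longlongrightarrow> 0) at_top" for n
  proof -
    have c: "0 < a n" by (rule pos)
    have "((\<lambda>k. ln (1 + (a n)^2 * k^2) / k) \<longlongrightarrow> 0) at_top" using c by real_asymp
    moreover have "\<forall>\<^sub>F k in at_top. ln (1 + (a n)^2 * k^2) / k = u n k / \<bar>k\<bar>"
      using eventually_gt_at_top[of 0] by eventually_elim (simp add: u_def)
    ultimately show ?thesis by (simp add: tendsto_cong)
  qed
  have b: "\<forall>\<^sub>F (n, k) in sequentially \<times>\<^sub>F at_top. norm (u n k / \<bar>k\<bar>) \<le> a n"
  proof -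
    have "\<forall>\<^sub>F (n, k) in sequentially \<times>\<^sub>F (at_top :: real filter). 0 < k"
      by (rule eventually_prod2[THEN iffD2]) (auto intro: eventually_gt_at_top)
    then show ?thesis
    proof (rule eventually_mono)
      fix p :: "nat \<times> real" assume "case p of (n, k) \<Rightarrow> 0 < k"
      then obtain n k where p: "p = (n, k)" "0 < k" by (cases p) auto
      have "u n k \<le> a n * k" using u_le[of n k] p by simp
      then show "case p of (n, k) \<Rightarrow> norm (u n k / \<bar>k\<bar>) \<le> a n"
        using p u_nonneg[of n k] by (simp add: divide_simps)
    qed
  qed
  have "((\<lambda>k. \<Sum>n. u n k / \<bar>k\<bar>) \<longlongrightarrow> (\<Sum>n. (0::real))) at_top"
    using tannerys_theorem[OF t b summ] by auto
  moreover have "(\<Sum>n. u n k / \<bar>k\<bar>) = A_fun a k / \<bar>k\<bar>" for k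
    unfolding A_fun_u by (rule suminf_divide[OF summable_u])
  ultimately show ?thesis by simp
qed

lemma summable_a2: "summable (\<lambda>n. (a n)^2)"
proof (rule summable_comparison_test[where g="\<lambda>n. suminf a * a n"])
  have an: "a n \<le> suminf a" for n
  proof -
    have "sum a {n} \<le> suminf a" by (rule sum_le_suminf[OF summ]) (use pos in \<open>auto intro: less_imp_le\<close>)
    then show ?thesis by simp
  qed
  have "norm ((a n)^2) \<le> suminf a * a n" for n
  proof -
    have "norm ((a n)^2) = a n * a n" by (simp add: power2_eq_square)
    also have "\<dots> \<le> suminf a * a n" using an[of n] pos[of n] by (intro mult_right_mono) auto
    finally show ?thesis .
  qed
  then show "\<exists>N. \<forall>n\<ge>N. norm ((a n)^2) \<le> suminf a * a n" by blast
  show "summable (\<lambda>n. suminf a * a n)" by (rule summable_mult[OF summ])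
qed

lemma A_div_zero: "((\<lambda>k. A_fun a k / \<bar>k\<bar>) \<longlongrightarrow> 0) (at 0)"
proof -
  define C where "C = (\<Sum>n. (a n)^2)"
  have Ak: "A_fun a k \<le> C * k^2" for k
  proof -
    have "(\<Sum>n. u n k) \<le> (\<Sum>n. (a n)^2 * k^2)"
      by (intro suminf_le u_le2 summable_u summable_mult2 summable_a2)
    also have "\<dots> = C * k^2" unfolding C_def by (rule suminf_mult2[OF summable_a2, symmetric])
    finally show ?thesis by (simp add: A_fun_u)
  qed
  have "((\<lambda>k. C * \<bar>k\<bar>) \<longlongrightarrow> C * \<bar>0\<bar>) (at 0)" by (intro tendsto_intros)
  then have z: "((\<lambda>k. C * \<bar>k\<bar>) \<longlongrightarrow> 0) (at 0)" by simp
  show ?thesis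
  proof (rule Lim_null_comparison[OF _ z])
    show "\<forall>\<^sub>F k in at 0. norm (A_fun a k / \<bar>k\<bar>) \<le> C * \<bar>k\<bar>"
    proof (intro always_eventually allI)
      fix k :: real
      show "norm (A_fun a k / \<bar>k\<bar>) \<le> C * \<bar>k\<bar>"
      proof (cases "k = 0")
        case False
        have "A_fun a k / \<bar>k\<bar> \<le> C * k^2 / \<bar>k\<bar>" using Ak[of k] by (simp add: divide_right_mono)
        also have "\<dots> = C * \<bar>k\<bar> * \<bar>k\<bar> / \<bar>k\<bar>" by (simp add: power2_eq_square mult.assoc)
        also have "\<dots> = C * \<bar>k\<bar>" using False by (intro nonzero_mult_div_cancel_right) simp
        finally show ?thesis using A_nonneg[of k] by simp
      qed (simp add: C_def)
    qed
  qed
qed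

end

lemma improper_int:
  fixes h F :: "real \<Rightarrow> real"
  assumes h0: "\<And>x. 0 < x \<Longrightarrow> 0 \<le> h x"
    and d: "\<And>x. 0 < x \<Longrightarrow> (F has_real_derivative h x) (at x)"
    and lA: "(F \<longlongrightarrow> A) (at_right 0)" and lB: "(F \<longlongrightarrow> B) at_top"
  shows "(h has_integral (B - A)) {0<..}"
proof -
  define I where "I m = {1 / real (Suc m) .. real (Suc m)}" for m
  define f where "f m x = (if x \<in> I m then h x else 0)" for m x
  have Isub: "I m \<subseteq> {0<..}" for m
    by (auto simp: I_def intro: less_le_trans[of 0 "1 / real (Suc m)"])
  have fint: "(f m has_integral (F (Suc m) - F (1 / Suc m))) {0<..}" for m
  proof -
    have "1 / real (Suc m) \<le> 1" by simp
    moreover have "1 \<le> real (Suc m)" by simp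
    ultimately have le: "1 / real (Suc m) \<le> real (Suc m)" by linarith
    have "(h has_integral (F (Suc m) - F (1 / Suc m))) (I m)"
      unfolding I_def
    proof (rule fundamental_theorem_of_calculus[OF le])
      fix x assume "x \<in> {1 / real (Suc m)..real (Suc m)}"
      then have "0 < x" using Isub[of m] by (auto simp: I_def)
      then show "(F has_vector_derivative h x) (at x within {1 / real (Suc m)..real (Suc m)})"
        using d by (simp add: has_real_derivative_iff_has_vector_derivative[symmetric] has_field_derivative_at_within)
    qed
    then show ?thesis unfolding f_def[abs_def] using has_integral_restrict[OF Isub] by blast
  qed
  have mono: "f m x \<le> f (Suc m) x" if "x \<in> {0<..}" for m x
  proof -
    have "1 / real (Suc (Suc m)) \<le> 1 / real (Suc m)" by (rule divide_left_mono) auto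
    moreover have "real (Suc m) \<le> real (Suc (Suc m))" by simp
    ultimately have "I m \<subseteq> I (Suc m)" unfolding I_def by auto
    then show ?thesis using h0[of x] that by (auto simp: f_def)
  qed
  have pw: "(\<lambda>m. f m x) \<longlonglongrightarrow> h x" if x: "x \<in> {0<..}" for x
  proof (rule tendsto_eventually)
    obtain N :: nat where N: "x + 1/x \<le> N" using real_arch_simple by blast
    show "\<forall>\<^sub>F m in sequentially. f m x = h x"
    proof (rule eventually_sequentiallyI[of N])
      fix m assume m: "N \<le> m"
      have x0: "0 < x" using x by simp
      have ix: "0 < 1/x" using x0 by simp
      have Nm: "real N \<le> real (Suc m)" using m by simp
      have "x \<le> real (Suc m)" using N Nm ix by linarith
      moreover have "1 / real (Suc m) \<le> x"
      proof -
        have "1/x \<le> real (Suc m)" using N Nm x0 by linarith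
        then show ?thesis using x0 by (simp add: field_simps)
      qed
      ultimately show "f m x = h x" by (simp add: f_def I_def)
    qed
  qed
  have lim: "(\<lambda>m. F (Suc m) - F (1 / Suc m)) \<longlonglongrightarrow> B - A"
  proof (intro tendsto_diff)
    have "filterlim (\<lambda>m. real (Suc m)) at_top sequentially"
      by (rule filterlim_compose[OF filterlim_real_sequentially filterlim_Suc])
    then show "(\<lambda>m. F (real (Suc m))) \<longlonglongrightarrow> B" by (rule filterlim_compose[OF lB])
    have "filterlim (\<lambda>m. 1 / real (Suc m)) (at_right 0) sequentially"
    proof (rule tendsto_imp_filterlim_at_right)
      show "(\<lambda>m. 1 / real (Suc m)) \<longlonglongrightarrow> 0"
        using LIMSEQ_inverse_real_of_nat by (simp add: inverse_eq_divide)
    qed auto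
    then show "(\<lambda>m. F (1 / real (Suc m))) \<longlonglongrightarrow> A" by (rule filterlim_compose[OF lA])
  qed
  have ieq: "(\<lambda>m. integral {0<..} (f m)) = (\<lambda>m. F (Suc m) - F (1 / Suc m))"
      using fint by (auto simp: integral_unique)
  have bnd: "bounded (range (\<lambda>m. integral {0<..} (f m)))"
  proof -
    note ieq
    moreover have "Bseq (\<lambda>m. F (Suc m) - F (1 / Suc m))" using lim by (rule convergent_imp_Bseq[OF convergentI])
    ultimately show ?thesis by (simp only: Bseq_eq_bounded)
  qed
  have mc: "h integrable_on {0<..} \<and> (\<lambda>m. integral {0<..} (f m)) \<longlonglongrightarrow> integral {0<..} h"
    by (rule monotone_convergence_increasing[where f=f])
      (use fint mono pw bnd in \<open>auto simp: has_integral_integrable\<close>)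
  have "(\<lambda>m. integral {0<..} (f m)) \<longlonglongrightarrow> B - A"
    using lim unfolding ieq .
  then have "integral {0<..} h = B - A" using mc LIMSEQ_unique by blast
  then show ?thesis using mc by (metis integrable_integral)
qed

lemma single_int: fixes c :: real assumes c: "0 < c"
  shows "((\<lambda>k. ln (1 + c^2 * k^2) / k^2) has_integral (pi * c)) {0<..}"
proof -
  define F where "F k = - ln (1 + c^2*k^2)/k + 2*c*arctan (c*k)" for k
  have "((\<lambda>k. ln (1 + c^2 * k^2) / k^2) has_integral (c * pi - 0)) {0<..}"
  proof (rule improper_int[where F=F])
    show "0 \<le> ln (1 + c^2 * x^2) / x^2" for x by simp
    show "(F has_real_derivative ln (1 + c^2 * x^2) / x^2) (at x)" if x: "0 < x" for x
    proof -
  have p: "0 < 1 + c^2 * x^2" by (simp add: add_pos_nonneg)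
  have "(F has_real_derivative (- ((2 * c^2 * x / (1 + c^2*x^2)) * x - ln (1 + c^2*x^2)) / x^2
          + 2 * c * (c / (1 + (c*x)^2)))) (at x)"
    unfolding F_def[abs_def] using x p
    by (auto intro!: derivative_eq_intros simp: power2_eq_square field_simps)
  moreover have "(- ((2 * c^2 * x / (1 + c^2*x^2)) * x - ln (1 + c^2*x^2)) / x^2
          + 2 * c * (c / (1 + (c*x)^2))) = ln (1 + c^2 * x^2) / x^2"
  proof -
    have e1: "(2 * c^2 * x / (1 + c^2*x^2)) * x / x^2 = 2 * c * (c / (1 + (c*x)^2))"
    proof -
      have xx: "x * x \<noteq> 0" using x by simp
      have "(2 * c^2 * x / (1 + c^2*x^2)) * x / x^2 = (2 * c^2 / (1 + c^2*x^2)) * ((x * x) / (x * x))"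
        by (simp add: power2_eq_square)
      also have "\<dots> = 2 * c^2 / (1 + c^2*x^2)" using xx by simp
      also have "\<dots> = 2 * c * (c / (1 + (c*x)^2))" by (simp add: power_mult_distrib mult.assoc power2_eq_square[of c])
      finally show ?thesis .
    qed
    have "(- ((2 * c^2 * x / (1 + c^2*x^2)) * x - ln (1 + c^2*x^2)) / x^2)
       = ln (1 + c^2*x^2) / x^2 - (2 * c^2 * x / (1 + c^2*x^2)) * x / x^2"
      by (simp add: diff_divide_distrib)
    then show ?thesis using e1 by simp
  qed
  ultimately show ?thesis by simp
qed
    show "(F \<longlongrightarrow> 0) (at_right 0)" unfolding F_def using c by real_asymp
    show "(F \<longlongrightarrow> c * pi) at_top" unfolding F_def using c by real_asymp
  qed
  then show ?thesis by (simp add: mult.commute)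
qed

context Aseq begin

lemma A_integral: "((\<lambda>k. A_fun a k / k^2) has_integral (pi * suminf a)) {0<..}"
proof -
  define G where "G N k = A_partial a N k / k^2" for N k
  have Gint: "(G N has_integral (pi * (\<Sum>n<N. a n))) {0<..}" for N
  proof -
    have "((\<lambda>k. \<Sum>n<N. u n k / k^2) has_integral (\<Sum>n<N. pi * a n)) {0<..}"
      by (intro has_integral_sum) (auto simp: u_def intro: single_int pos)
    moreover have "G N = (\<lambda>k. \<Sum>n<N. u n k / k^2)"
      by (simp add: fun_eq_iff G_def A_partial_u sum_divide_distrib)
    moreover have "(\<Sum>n<N. pi * a n) = pi * (\<Sum>n<N. a n)" by (simp add: sum_distrib_left)
    ultimately show ?thesis by simp
  qed
  have mono: "G N k \<le> G (Suc N) k" for N k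
    by (simp add: G_def A_partial_u divide_right_mono u_nonneg add_divide_distrib)
  have pw: "(\<lambda>N. G N k) \<longlonglongrightarrow> A_fun a k / k^2" for k
    unfolding G_def divide_inverse by (intro tendsto_mult_right A_sums)
  have ints: "(\<lambda>N. integral {0<..} (G N)) = (\<lambda>N. pi * (\<Sum>n<N. a n))"
    using Gint by (auto simp: integral_unique)
  have lim: "(\<lambda>N. pi * (\<Sum>n<N. a n)) \<longlonglongrightarrow> pi * suminf a"
    by (intro tendsto_mult_left summable_LIMSEQ summ)
  have bnd: "bounded (range (\<lambda>N. integral {0<..} (G N)))"
  proof -
    have "Bseq (\<lambda>N. pi * (\<Sum>n<N. a n))" using lim by (rule convergent_imp_Bseq[OF convergentI])
    then show ?thesis unfolding ints by (simp only: Bseq_eq_bounded)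
  qed
  have mc: "(\<lambda>k. A_fun a k / k^2) integrable_on {0<..} \<and> (\<lambda>N. integral {0<..} (G N)) \<longlonglongrightarrow> integral {0<..} (\<lambda>k. A_fun a k / k^2)"
    by (rule monotone_convergence_increasing[where f=G])
      (use Gint mono pw bnd in \<open>auto simp: has_integral_integrable\<close>)
  then have "integral {0<..} (\<lambda>k. A_fun a k / k^2) = pi * suminf a"
    using lim ints LIMSEQ_unique by metis
  then show ?thesis using mc by (metis integrable_integral)
qed

end

context Aseq begin

definition L0 :: real where "L0 = 3 / (a 0)^2"

lemma gseq_props:
  "lip L0 (gseq a n) \<and> supp_in (sum a {..n}) (gseq a n)
   \<and> (\<forall>k. fourier (gseq a n) k = complex_of_real (\<Prod>i\<le>n. etahat (a i * k)))"
proof (induction n)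
  case 0
  show ?case using eta_scaled_lip[OF pos[of 0]] eta_scaled_supp[OF pos[of 0]] fourier_eta_scaled[OF pos[of 0]]
    by (simp add: L0_def)
next
  case (Suc n)
  interpret cs: convsetup "gseq a n" "eta_scaled (a (Suc n))" L0 "sum a {..n}" "a (Suc n)"
    using Suc.IH eta_scaled_cont[OF pos] eta_scaled_supp[OF pos] eta_scaled_nonneg[OF pos]
      integral_eta_scaled[OF pos] by unfold_locales auto
  have "fourier (gseq a (Suc n)) k = complex_of_real (\<Prod>i\<le>Suc n. etahat (a i * k))" for k
    using cs.fourier_conv[of k] Suc.IH fourier_eta_scaled[OF pos[of "Suc n"], of k]
    by (simp add: mult.commute)
  then show ?case using cs.conv_lip cs.conv_supp by (simp add: add.commute)
qed

lemma gseq_step: "\<bar>gseq a (Suc n) x - gseq a n x\<bar> \<le> L0 * a (Suc n)"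
proof -
  interpret cs: convsetup "gseq a n" "eta_scaled (a (Suc n))" L0 "sum a {..n}" "a (Suc n)"
    using gseq_props eta_scaled_cont[OF pos] eta_scaled_supp[OF pos] eta_scaled_nonneg[OF pos]
      integral_eta_scaled[OF pos] by unfold_locales auto
  show ?thesis using cs.conv_close[of x] by simp
qed

lemma L0_pos: "0 < L0" using pos[of 0] by (simp add: L0_def)

definition tl :: "nat \<Rightarrow> real" where "tl n = suminf a - sum a {..<Suc n}"

lemma tl_lim: "tl \<longlonglongrightarrow> 0"
proof -
  have "(\<lambda>n. sum a {..<Suc n}) \<longlonglongrightarrow> suminf a"
    using LIMSEQ_Suc[OF summable_LIMSEQ[OF summ]] by simp
  then have "(\<lambda>n. suminf a - sum a {..<Suc n}) \<longlonglongrightarrow> suminf a - suminf a"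
    by (intro tendsto_diff tendsto_const)
  then show ?thesis by (simp add: tl_def[abs_def])
qed

lemma tl_eq: "(\<Sum>i. a (i + Suc n)) = tl n"
  using suminf_split_initial_segment[OF summ, of "Suc n"] by (simp add: tl_def)

lemma g_conv: "(\<lambda>n. gseq a n x) \<longlonglongrightarrow> g_lim a x"
  and g_tail: "\<bar>g_lim a x - gseq a n x\<bar> \<le> L0 * tl n"
proof -
  define d where "d i = gseq a (Suc i) x - gseq a i x" for i
  have db: "\<bar>d i\<bar> \<le> L0 * a (Suc i)" for i unfolding d_def by (rule gseq_step)
  have sM: "summable (\<lambda>i. L0 * a (Suc i))"
    by (intro summable_mult) (use summ summable_Suc_iff in blast)
  have sd: "summable d" by (rule summable_comparison_test[OF _ sM]) (use db in auto)
  have tel: "gseq a n x = gseq a 0 x + sum d {..<n}" for n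
  proof -
    have "sum d {..<n} = gseq a n x - gseq a 0 x" unfolding d_def by (rule sum_lessThan_telescope)
    then show ?thesis by linarith
  qed
  have teleq: "(\<lambda>n. gseq a n x) = (\<lambda>n. gseq a 0 x + sum d {..<n})"
    by (rule ext) (rule tel)
  have c: "(\<lambda>n. gseq a n x) \<longlonglongrightarrow> gseq a 0 x + suminf d"
    unfolding teleq by (intro tendsto_add tendsto_const summable_LIMSEQ sd)
  then have gl: "g_lim a x = gseq a 0 x + suminf d"
    unfolding g_lim_def by (rule limI)
  show "(\<lambda>n. gseq a n x) \<longlonglongrightarrow> g_lim a x" using c gl by simp
  have "g_lim a x - gseq a n x = suminf d - sum d {..<n}" using gl tel[of n] by simp
  also have "\<dots> = (\<Sum>i. d (i + n))" using suminf_split_initial_segment[OF sd, of n] by simp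
  finally have e: "g_lim a x - gseq a n x = (\<Sum>i. d (i + n))" .
  have sdn: "summable (\<lambda>i. d (i + n))" using sd by (rule summable_ignore_initial_segment)
  have sMn: "summable (\<lambda>i. L0 * a (Suc (i + n)))"
    using summable_ignore_initial_segment[OF sM, of n] by simp
  have "(\<Sum>i. d (i + n)) \<le> (\<Sum>i. L0 * a (Suc (i + n)))"
    by (rule suminf_le) (use db sdn sMn abs_le_D1 in auto)
  moreover have "(\<Sum>i. - d (i + n)) \<le> (\<Sum>i. L0 * a (Suc (i + n)))"
    by (rule suminf_le[OF _ summable_minus[OF sdn] sMn]) (use db abs_le_D2 in auto)
  moreover have "(\<Sum>i. - d (i + n)) = - (\<Sum>i. d (i + n))" by (rule suminf_minus[OF sdn])
  moreover have "(\<Sum>i. L0 * a (Suc (i + n))) = L0 * tl n"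
  proof -
    have "(\<Sum>i. L0 * a (Suc (i + n))) = L0 * (\<Sum>i. a (i + Suc n))"
      using suminf_mult[of "\<lambda>i. a (i + Suc n)" L0] summable_ignore_initial_segment[OF summ, of "Suc n"]
      by simp
    then show ?thesis using tl_eq by simp
  qed
  ultimately show "\<bar>g_lim a x - gseq a n x\<bar> \<le> L0 * tl n" using e by linarith
qed

lemma g_supp: "supp_in (suminf a) (g_lim a)"
  unfolding supp_in_def
proof (intro allI impI)
  fix x assume x: "suminf a < \<bar>x\<bar>"
  have "gseq a n x = 0" for n
  proof -
    have "sum a {..n} \<le> suminf a" by (rule sum_le_suminf[OF summ]) (use pos in \<open>auto intro: less_imp_le\<close>)
    then show ?thesis using gseq_props[of n] x by (auto simp: supp_in_def)
  qed
  then show "g_lim a x = 0" using g_conv[of x] by (simp add: LIMSEQ_const_iff)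
qed

lemma g_lip: "lip L0 (g_lim a)"
  unfolding lip_def
proof (intro allI)
  fix x y
  have "(\<lambda>n. \<bar>gseq a n x - gseq a n y\<bar>) \<longlonglongrightarrow> \<bar>g_lim a x - g_lim a y\<bar>"
    by (intro tendsto_rabs tendsto_diff g_conv)
  moreover have "\<bar>gseq a n x - gseq a n y\<bar> \<le> L0 * \<bar>x - y\<bar>" for n
    using gseq_props[of n] by (simp add: lip_def)
  ultimately show "\<bar>g_lim a x - g_lim a y\<bar> \<le> L0 * \<bar>x - y\<bar>"
    by (intro LIMSEQ_le_const2) auto
qed

lemma g_cont: "continuous_on UNIV (g_lim a)" using g_lip by (rule lip_continuous)

lemma fourier_lim: "(\<lambda>n. fourier (gseq a n) k) \<longlonglongrightarrow> fourier (g_lim a) k"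
proof -
  define S where "S = suminf a"
  have Sge: "sum a {..n} \<le> S" for n
    unfolding S_def by (rule sum_le_suminf[OF summ]) (use pos in \<open>auto intro: less_imp_le\<close>)
  have S0: "0 \<le> S" using Sge[of 0] pos[of 0] by simp
  have gn: "continuous_on UNIV (gseq a n)" "supp_in S (gseq a n)" for n
    using gseq_props[of n] Sge[of n] by (auto intro: lip_continuous supp_in_mono)
  have gs: "supp_in S (g_lim a)" using g_supp by (simp add: S_def)
  have diff: "norm (fourier (g_lim a) k - fourier (gseq a n) k) \<le> L0 * tl n * (2 * S)" for n
  proof -
    define D where "D x = EE k x * complex_of_real (g_lim a x - gseq a n x)" for x
    have ig: "(\<lambda>x. EE k x * complex_of_real (g_lim a x)) integrable_on {-S..S}"
      by (intro integrable_continuous_interval continuous_intros EE_cont[THEN continuous_on_subset]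
          continuous_on_compose2[OF g_cont]) auto
    have ign: "(\<lambda>x. EE k x * complex_of_real (gseq a n x)) integrable_on {-S..S}"
      by (intro integrable_continuous_interval continuous_intros EE_cont[THEN continuous_on_subset]
          continuous_on_compose2[OF gn(1)]) auto
    have "fourier (g_lim a) k - fourier (gseq a n) k
        = integral {-S..S} (\<lambda>x. EE k x * complex_of_real (g_lim a x)) - integral {-S..S} (\<lambda>x. EE k x * complex_of_real (gseq a n x))"
      using fourier_has(2)[OF g_cont gs] fourier_has(2)[OF gn] by simp
    also have "\<dots> = integral {-S..S} D"
      unfolding D_def by (simp add: integral_diff[OF ig ign, symmetric] algebra_simps)
    finally have e: "fourier (g_lim a) k - fourier (gseq a n) k = integral {-S..S} D" .
    have hD: "(D has_integral integral {-S..S} D) (cbox (-S) S)"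
      using integrable_diff[OF ig ign] unfolding cbox_interval D_def
      by (simp add: algebra_simps integrable_integral)
    have "norm (integral {-S..S} D) \<le> L0 * tl n * Henstock_Kurzweil_Integration.content (cbox (-S) S)"
    proof (rule has_integral_bound[OF _ hD])
      show "0 \<le> L0 * tl n" using abs_ge_zero[of "g_lim a 0 - gseq a n 0"] g_tail[of 0 n] by linarith
      fix x show "norm (D x) \<le> L0 * tl n"
        using g_tail[of x n] by (simp add: D_def EE_def norm_mult flip: of_real_diff)
    qed
    then show ?thesis using e S0 by simp
  qed
  have z: "(\<lambda>n. L0 * tl n * (2 * S)) \<longlonglongrightarrow> 0"
    using tendsto_mult_right[OF tendsto_mult_left[OF tl_lim, of L0], of "2 * S"] by simp
  have "(\<lambda>n. fourier (g_lim a) k - fourier (gseq a n) k) \<longlonglongrightarrow> 0"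
    by (rule Lim_null_comparison[OF _ z]) (use diff in auto)
  then have "(\<lambda>n. fourier (g_lim a) k - (fourier (g_lim a) k - fourier (gseq a n) k)) \<longlonglongrightarrow> fourier (g_lim a) k - 0"
    by (intro tendsto_diff tendsto_const)
  then show ?thesis by simp
qed

lemma exp_negA: "exp (- A_partial a N s) = (\<Prod>i<N. 1 / (1 + (a i)^2 * s^2))"
proof -
  have "exp (- A_partial a N s) = (\<Prod>i<N. exp (- ln (1 + (a i)^2 * s^2)))"
    by (simp add: A_partial_def exp_sum flip: sum_negf)
  also have "\<dots> = (\<Prod>i<N. 1 / (1 + (a i)^2 * s^2))"
    by (intro prod.cong refl) (simp add: exp_minus exp_ln add_pos_nonneg inverse_eq_divide)
  finally show ?thesis .
qed

lemma final_fourier: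
  "Im (fourier (g_lim a) k) = 0
   \<and> exp (- A_fun a (sqrt (7/40) * k)) \<le> Re (fourier (g_lim a) k)
   \<and> Re (fourier (g_lim a) k) \<le> exp (- A_fun a (sqrt (1/20) * k))"
proof -
  define P where "P n = (\<Prod>i\<le>n. etahat (a i * k))" for n
  have cP: "(\<lambda>n. complex_of_real (P n)) \<longlonglongrightarrow> fourier (g_lim a) k"
    using fourier_lim[of k] gseq_props by (simp add: P_def)
  have PRe: "P \<longlonglongrightarrow> Re (fourier (g_lim a) k)"
    using tendsto_Re[OF cP] by simp
  have "(\<lambda>n. Im (complex_of_real (P n))) \<longlonglongrightarrow> Im (fourier (g_lim a) k)"
    by (rule tendsto_Im[OF cP])
  then have im: "Im (fourier (g_lim a) k) = 0"
    using LIMSEQ_unique[OF _ tendsto_const] by fastforce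
  have lA: "(\<lambda>n. exp (- A_partial a (Suc n) s)) \<longlonglongrightarrow> exp (- A_fun a s)" for s
    by (intro tendsto_exp tendsto_minus LIMSEQ_Suc[OF A_sums])
  have ex: "exp (- A_partial a (Suc n) (sqrt c * k)) = (\<Prod>i\<le>n. 1 / (1 + c * (a i * k)^2))"
    if "0 \<le> c" for c n
    using that by (simp add: exp_negA lessThan_Suc_atMost power_mult_distrib mult_ac)
  have lo: "exp (- A_partial a (Suc n) (sqrt (7/40) * k)) \<le> P n" for n
    unfolding ex[of "7/40", simplified] P_def
    by (intro prod_mono conjI) (use etahat_bounds(1) in \<open>auto intro: add_pos_nonneg\<close>)
  have hi: "P n \<le> exp (- A_partial a (Suc n) (sqrt (1/20) * k))" for n
  proof -
    have "P n \<le> (\<Prod>i\<le>n. 1 / (1 + (a i * k)^2 / 20))"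
      unfolding P_def
    proof (intro prod_mono conjI)
      fix i
      have "0 < 1 / (1 + 7/40 * (a i * k)^2)" by (simp add: add_pos_nonneg)
      then show "0 \<le> etahat (a i * k)" using etahat_bounds(1)[of "a i * k"] by linarith
      show "etahat (a i * k) \<le> 1 / (1 + (a i * k)^2 / 20)" by (rule etahat_bounds(2))
    qed
    also have "\<dots> = exp (- A_partial a (Suc n) (sqrt (1/20) * k))"
      using ex[of "1/20" n] by simp
    finally show ?thesis .
  qed
  have "exp (- A_fun a (sqrt (7/40) * k)) \<le> Re (fourier (g_lim a) k)"
    by (rule LIMSEQ_le[OF lA PRe]) (use lo in auto)
  moreover have "Re (fourier (g_lim a) k) \<le> exp (- A_fun a (sqrt (1/20) * k))"
    by (rule LIMSEQ_le[OF PRe lA]) (use hi in auto)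
  ultimately show ?thesis using im by simp
qed

end

theorem mainTheorem5:
  fixes a :: "nat \<Rightarrow> real"
  assumes pos: "\<And>n. a n > 0"
    and summ: "summable a"
  shows "(\<forall>K. compact K \<longrightarrow> uniform_limit K (A_partial a) (A_fun a) sequentially)
    \<and> continuous_on UNIV (A_fun a)
    \<and> (\<forall>k. 0 \<le> A_fun a k \<and> A_fun a k \<le> suminf a * \<bar>k\<bar>)
    \<and> (\<forall>k. A_fun a (- k) = A_fun a k)
    \<and> strict_mono_on {0..} (A_fun a)
    \<and> filterlim (A_fun a) at_top at_top
    \<and> ((\<lambda>k. A_fun a k / \<bar>k\<bar>) \<longlongrightarrow> 0) at_top
    \<and> ((\<lambda>k. A_fun a k / \<bar>k\<bar>) \<longlongrightarrow> 0) (at 0)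
    \<and> ((\<lambda>k. A_fun a k / k\<^sup>2) has_integral (pi * suminf a)) {0<..}
    \<and> (\<forall>k. Im (fourier (g_lim a) k) = 0
         \<and> exp (- A_fun a (sqrt (7/40) * k)) \<le> Re (fourier (g_lim a) k)
         \<and> Re (fourier (g_lim a) k) \<le> exp (- A_fun a (sqrt (1/20) * k)))"
proof -
  interpret Aseq a using pos summ by unfold_locales
  show ?thesis using unif A_cont A_nonneg A_le A_even A_smono A_top A_div_top A_div_zero A_integral final_fourier
    by auto
qed

end
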